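(* Let $k$ be a field of prime characteristic $p$. Define $T$-spaces of $k_0\langle X\rangle$ by $H_1=\{x_1^p\}^S$ and $H_{n+1}=(H_nH_1)^S$ for $n\ge1$. Then $(H_mH_n)^S=H_{m+n}$ for all $m,n\ge1$.
   Context: $X=\{x_1,x_2,\ldots\}$ is countably infinite; $k_0\langle X\rangle$ is the free associative (non-unital) $k$-algebra on $X$. A $T$-space is a $k$-subspace of $k_0\langle X\rangle$ invariant under every algebra endomorphism of $k_0\langle X\rangle$; $(A)^S$ is the $T$-space generated by a subset $A$. For subsets $A,B$, $AB=\{ab:a\in A,b\in B\}$. *)

theory Defs
  imports Main "HOL-Library.Poly_Mapping" "HOL-Computational_Algebra.Primes"
begin

text \<open>Free non-unital associative algebra k_0<X> on X = {x_1, x_2, ...}: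
  finitely supported k-linear combinations of nonempty words over nat
  (the letter i stands for x_(i+1)).\<close>

type_synonym 'k ncpoly = "nat list \<Rightarrow>\<^sub>0 'k"

definition FA :: "'k::field ncpoly set" where
  "FA = {f. [] \<notin> Poly_Mapping.keys f}"

definition var :: "nat \<Rightarrow> 'k::field ncpoly" where
  "var i = Poly_Mapping.single [i] 1"

definition smult :: "'k::field \<Rightarrow> 'k ncpoly \<Rightarrow> 'k ncpoly" where
  "smult c f = Poly_Mapping.map (\<lambda>x. c * x) f"

definition pmul :: "'k::field ncpoly \<Rightarrow> 'k ncpoly \<Rightarrow> 'k ncpoly" where
  "pmul f g = (\<Sum>u\<in>Poly_Mapping.keys f. \<Sum>v\<in>Poly_Mapping.keys g.
                 Poly_Mapping.single (u @ v) (Poly_Mapping.lookup f u * Poly_Mapping.lookup g v))"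

fun ppow :: "'k::field ncpoly \<Rightarrow> nat \<Rightarrow> 'k ncpoly" where
  "ppow f 0 = 0"
| "ppow f (Suc 0) = f"
| "ppow f (Suc (Suc n)) = pmul f (ppow f (Suc n))"

definition setmul :: "'k::field ncpoly set \<Rightarrow> 'k ncpoly set \<Rightarrow> 'k ncpoly set" where
  "setmul A B = {pmul a b | a b. a \<in> A \<and> b \<in> B}"

definition is_endo :: "('k::field ncpoly \<Rightarrow> 'k ncpoly) \<Rightarrow> bool" where
  "is_endo \<phi> \<longleftrightarrow> (\<forall>f\<in>FA. \<phi> f \<in> FA) \<and>
     (\<forall>f\<in>FA. \<forall>g\<in>FA. \<phi> (f + g) = \<phi> f + \<phi> g \<and> \<phi> (pmul f g) = pmul (\<phi> f) (\<phi> g)) \<and>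
     (\<forall>f\<in>FA. \<forall>c. \<phi> (smult c f) = smult c (\<phi> f))"

definition T_space :: "'k::field ncpoly set \<Rightarrow> bool" where
  "T_space V \<longleftrightarrow> V \<subseteq> FA \<and> 0 \<in> V \<and>
     (\<forall>f\<in>V. \<forall>g\<in>V. f + g \<in> V) \<and> (\<forall>f\<in>V. \<forall>c. smult c f \<in> V) \<and>
     (\<forall>\<phi>. is_endo \<phi> \<longrightarrow> \<phi> ` V \<subseteq> V)"

definition Tgen :: "'k::field ncpoly set \<Rightarrow> 'k ncpoly set" where
  "Tgen A = \<Inter>{V. T_space V \<and> A \<subseteq> V}"

text \<open>H_1 = {x_1^p}^S, H_(n+1) = (H_n H_1)^S; H 0 is an unused dummy.\<close>
fun H :: "nat \<Rightarrow> nat \<Rightarrow> 'k::field ncpoly set" where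
  "H p 0 = {0}"
| "H p (Suc 0) = Tgen {ppow (var 0) p}"
| "H p (Suc (Suc n)) = Tgen (setmul (H p (Suc n)) (H p (Suc 0)))"

end

theory Submission
  imports Defs
begin


instantiation list :: (type) monoid_add
begin
definition plus_list :: "'a list \<Rightarrow> 'a list \<Rightarrow> 'a list" where "plus_list xs ys = xs @ ys"
definition zero_list :: "'a list" where "zero_list = []"
instance by standard (auto simp: plus_list_def zero_list_def)
end

lemma poly_sum_single: "f = (\<Sum>w\<in>Poly_Mapping.keys f. Poly_Mapping.single w (Poly_Mapping.lookup f w))"
  by (rule poly_mapping_eqI) (simp add: lookup_sum lookup_single when_def in_keys_iff)

lemma mult_single_list: "Poly_Mapping.single u a * Poly_Mapping.single v b = Poly_Mapping.single (u @ v) (a * (b::'k::field))"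
  using mult_single[of u a v b] by (simp add: plus_list_def)

lemma pmul_eq: "pmul f g = f * (g :: 'k::field ncpoly)"
proof -
  have "f * g = (\<Sum>u\<in>Poly_Mapping.keys f. Poly_Mapping.single u (Poly_Mapping.lookup f u)) * (\<Sum>v\<in>Poly_Mapping.keys g. Poly_Mapping.single v (Poly_Mapping.lookup g v))"
    by (metis poly_sum_single)
  also have "\<dots> = pmul f g"
    by (simp add: pmul_def sum_distrib_left sum_distrib_right mult_single_list) (rule sum.swap)
  finally show ?thesis by simp
qed

lemma smult_eq: "smult c f = Poly_Mapping.single [] c * f"
  using mult_map_scale_conv_mult[of c f] by (simp add: smult_def zero_list_def)



lemma FA_iff: "f \<in> FA \<longleftrightarrow> (\<forall>w\<in>Poly_Mapping.keys f. w \<noteq> [])"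
  unfolding FA_def by auto

lemma FA_0[simp]: "0 \<in> FA" by (simp add: FA_iff)

lemma FA_add: "f \<in> FA \<Longrightarrow> g \<in> FA \<Longrightarrow> f + g \<in> FA"
  using keys_add[of f g] unfolding FA_iff by blast

lemma FA_mult: "f \<in> FA \<Longrightarrow> (g::'k::field ncpoly) \<in> FA \<Longrightarrow> f * g \<in> FA"
  using keys_mult[of f g] unfolding FA_iff by (auto simp: plus_list_def)

lemma FA_mult_right: "(g::'k::field ncpoly) \<in> FA \<Longrightarrow> f * g \<in> FA"
  using keys_mult[of f g] unfolding FA_iff by (auto simp: plus_list_def)

lemma FA_smult: "f \<in> FA \<Longrightarrow> smult c f \<in> FA"
  by (simp add: smult_eq FA_mult_right)

lemma FA_single: "w \<noteq> [] \<Longrightarrow> Poly_Mapping.single w c \<in> FA"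
  by (simp add: FA_iff)

lemma FA_var[simp]: "var i \<in> FA"
  by (simp add: var_def FA_single)

lemma FA_sum: "finite I \<Longrightarrow> (\<And>i. i \<in> I \<Longrightarrow> f i \<in> FA) \<Longrightarrow> sum f I \<in> FA"
  by (induction I rule: finite_induct) (auto intro: FA_add)

lemma T_space_FA: "T_space FA"
  unfolding T_space_def is_endo_def by (auto intro: FA_add FA_smult)

lemma T_endo: "T_space V \<Longrightarrow> is_endo \<phi> \<Longrightarrow> f \<in> V \<Longrightarrow> \<phi> f \<in> V"
  unfolding T_space_def by blast

lemma Tgen_T: assumes "A \<subseteq> FA" shows "T_space (Tgen A)"
proof -
  define F where "F = {V. T_space V \<and> A \<subseteq> V}"
  have ne: "FA \<in> F" using assms T_space_FA by (auto simp: F_def)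
  have 1: "\<Inter> F \<subseteq> FA" using ne by auto
  have 2: "0 \<in> \<Inter> F" unfolding F_def T_space_def by blast
  have 3: "\<forall>f\<in>\<Inter> F. \<forall>g\<in>\<Inter> F. f + g \<in> \<Inter> F" unfolding F_def T_space_def by blast
  have 4: "\<forall>f\<in>\<Inter> F. \<forall>c. smult c f \<in> \<Inter> F" unfolding F_def T_space_def by blast
  have 5: "\<forall>\<phi>. is_endo \<phi> \<longrightarrow> \<phi> ` \<Inter> F \<subseteq> \<Inter> F"
  proof (intro allI impI subsetI)
    fix \<phi> y assume e: "is_endo \<phi>" and "y \<in> \<phi> ` \<Inter> F"
    then obtain x where x: "x \<in> \<Inter> F" "y = \<phi> x" by blast
    show "y \<in> \<Inter> F"
    proof
      fix V assume V: "V \<in> F"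
      then have "x \<in> V" using x by blast
      moreover have "T_space V" using V by (simp add: F_def)
      ultimately show "y \<in> V" using e x T_endo by blast
    qed
  qed
  have "Tgen A = \<Inter> F" by (simp add: Tgen_def F_def)
  then show ?thesis unfolding T_space_def using 1 2 3 4 5 by (intro conjI) simp_all
qed

lemma Tgen_least: "T_space V \<Longrightarrow> A \<subseteq> V \<Longrightarrow> Tgen A \<subseteq> V"
  unfolding Tgen_def by auto

lemma Tgen_sub: "A \<subseteq> Tgen A"
  unfolding Tgen_def by auto

lemma T_FA: "T_space V \<Longrightarrow> f \<in> V \<Longrightarrow> f \<in> FA"
  unfolding T_space_def by blast

lemma endo_FA: "is_endo \<phi> \<Longrightarrow> f \<in> FA \<Longrightarrow> \<phi> f \<in> FA"
  unfolding is_endo_def by blast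

lemma endo_add: "is_endo \<phi> \<Longrightarrow> f \<in> FA \<Longrightarrow> g \<in> FA \<Longrightarrow> \<phi> (f + g) = \<phi> f + \<phi> g"
  unfolding is_endo_def by blast

lemma endo_mult: "is_endo \<phi> \<Longrightarrow> f \<in> FA \<Longrightarrow> g \<in> FA \<Longrightarrow> \<phi> (f * g) = \<phi> f * \<phi> g"
  unfolding is_endo_def by (simp add: pmul_eq)

lemma endo_smult: "is_endo \<phi> \<Longrightarrow> f \<in> FA \<Longrightarrow> \<phi> (smult c f) = smult c (\<phi> f)"
  unfolding is_endo_def by blast

lemma endo_0: assumes "is_endo \<phi>" shows "\<phi> 0 = 0"
proof -
  have "\<phi> (0 + 0) = \<phi> 0 + \<phi> 0" using endo_add[OF assms FA_0 FA_0] .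
  then show ?thesis by simp
qed

lemma endo_sum: assumes "is_endo \<phi>" "finite I" "\<And>i. i \<in> I \<Longrightarrow> f i \<in> FA" shows "\<phi> (sum f I) = (\<Sum>i\<in>I. \<phi> (f i))"
  using assms(2,3) by (induction I rule: finite_induct) (auto simp: endo_0[OF assms(1)] endo_add[OF assms(1)] FA_sum)

lemma endo_id: "is_endo (\<lambda>x. x)"
  unfolding is_endo_def by simp

lemma endo_comp: "is_endo \<phi> \<Longrightarrow> is_endo \<psi> \<Longrightarrow> is_endo (\<lambda>x. \<phi> (\<psi> x))"
  unfolding is_endo_def by simp

lemma central: "Poly_Mapping.single [] c * h = h * Poly_Mapping.single [] (c::'k::field)"
proof -
  have "Poly_Mapping.single [] c * h = (\<Sum>w\<in>Poly_Mapping.keys h. Poly_Mapping.single [] c * Poly_Mapping.single w (Poly_Mapping.lookup h w))"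
    by (subst poly_sum_single[of h]) (simp add: sum_distrib_left)
  also have "\<dots> = (\<Sum>w\<in>Poly_Mapping.keys h. Poly_Mapping.single w (Poly_Mapping.lookup h w) * Poly_Mapping.single [] c)"
    by (simp add: mult_single_list mult.commute)
  also have "\<dots> = h * Poly_Mapping.single [] c"
    by (subst (2) poly_sum_single[of h]) (simp add: sum_distrib_right)
  finally show ?thesis .
qed

lemma single_nil_mult: "Poly_Mapping.single [] (a * b) = Poly_Mapping.single [] a * Poly_Mapping.single [] (b::'k::field)"
  by (simp add: mult_single_list)



definition subst :: "(nat \<Rightarrow> 'k::field ncpoly) \<Rightarrow> 'k ncpoly \<Rightarrow> 'k ncpoly" where
  "subst \<sigma> f = (\<Sum>w\<in>Poly_Mapping.keys f. Poly_Mapping.single [] (Poly_Mapping.lookup f w) * prod_list (map \<sigma> w))"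

lemma subst_superset:
  assumes "finite K" "Poly_Mapping.keys f \<subseteq> K"
  shows "subst \<sigma> f = (\<Sum>w\<in>K. Poly_Mapping.single [] (Poly_Mapping.lookup f w) * prod_list (map \<sigma> w))"
  unfolding subst_def
  by (rule sum.mono_neutral_left[OF assms]) (auto simp: in_keys_iff)

lemma subst_add: "subst \<sigma> (f + g) = subst \<sigma> f + subst \<sigma> g"
proof -
  let ?K = "Poly_Mapping.keys f \<union> Poly_Mapping.keys g"
  have fin: "finite ?K" by simp
  have "subst \<sigma> (f + g) = (\<Sum>w\<in>?K. Poly_Mapping.single [] (Poly_Mapping.lookup (f+g) w) * prod_list (map \<sigma> w))"
    by (rule subst_superset[OF fin]) (rule keys_add)
  also have "\<dots> = (\<Sum>w\<in>?K. Poly_Mapping.single [] (Poly_Mapping.lookup f w) * prod_list (map \<sigma> w))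
     + (\<Sum>w\<in>?K. Poly_Mapping.single [] (Poly_Mapping.lookup g w) * prod_list (map \<sigma> w))"
    by (simp add: lookup_add single_add distrib_right sum.distrib)
  also have "\<dots> = subst \<sigma> f + subst \<sigma> g"
    by (simp add: subst_superset[OF fin, symmetric])
  finally show ?thesis .
qed

lemma subst_0[simp]: "subst \<sigma> 0 = 0"
  by (simp add: subst_def)

lemma subst_sum: "finite I \<Longrightarrow> subst \<sigma> (sum f I) = (\<Sum>i\<in>I. subst \<sigma> (f i))"
  by (induction I rule: finite_induct) (auto simp: subst_add)

lemma subst_single: "subst \<sigma> (Poly_Mapping.single w c) = Poly_Mapping.single [] c * prod_list (map \<sigma> w)"
  by (simp add: subst_def)

lemma lookup_smult: "Poly_Mapping.lookup (smult c f) w = c * Poly_Mapping.lookup f w"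
  unfolding smult_def by (simp add: map.rep_eq when_def)

lemma keys_smult: "Poly_Mapping.keys (smult c f) \<subseteq> Poly_Mapping.keys f"
  by (auto simp: in_keys_iff lookup_smult)

lemma subst_smult: "subst \<sigma> (smult c f) = smult c (subst \<sigma> f)"
proof -
  have "subst \<sigma> (smult c f) = (\<Sum>w\<in>Poly_Mapping.keys f. Poly_Mapping.single [] (Poly_Mapping.lookup (smult c f) w) * prod_list (map \<sigma> w))"
    by (rule subst_superset[OF _ keys_smult]) simp
  also have "\<dots> = (\<Sum>w\<in>Poly_Mapping.keys f. Poly_Mapping.single [] (c * Poly_Mapping.lookup f w) * prod_list (map \<sigma> w))"
    by (simp only: lookup_smult)
  also have "\<dots> = smult c (subst \<sigma> f)"
    by (simp only: single_nil_mult subst_def smult_eq sum_distrib_left mult.assoc)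
  finally show ?thesis .
qed

lemma subst_mult: "subst \<sigma> (f * g) = subst \<sigma> f * subst \<sigma> g"
proof -
  let ?m = "\<lambda>h w. Poly_Mapping.single w (Poly_Mapping.lookup h w)"
  have "f * g = (\<Sum>u\<in>Poly_Mapping.keys f. ?m f u) * (\<Sum>v\<in>Poly_Mapping.keys g. ?m g v)"
    by (rule arg_cong2[where f="(*)"]; rule poly_sum_single)
  also have "\<dots> = (\<Sum>u\<in>Poly_Mapping.keys f. \<Sum>v\<in>Poly_Mapping.keys g. ?m f u * ?m g v)"
    by (simp add: sum_distrib_left sum_distrib_right) (rule sum.swap)
  finally have fg: "f * g = \<dots>" .
  have mono: "subst \<sigma> (Poly_Mapping.single u a * Poly_Mapping.single v b) = subst \<sigma> (Poly_Mapping.single u a) * subst \<sigma> (Poly_Mapping.single v b)" for u v a b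
  proof -
    have "subst \<sigma> (Poly_Mapping.single u a * Poly_Mapping.single v b) = Poly_Mapping.single [] a * Poly_Mapping.single [] b * (prod_list (map \<sigma> u) * prod_list (map \<sigma> v))"
      unfolding mult_single_list subst_single map_append prod_list.append single_nil_mult[symmetric] by simp
    also have "\<dots> = Poly_Mapping.single [] a * (Poly_Mapping.single [] b * prod_list (map \<sigma> u)) * prod_list (map \<sigma> v)"
      by (simp add: mult.assoc)
    also have "\<dots> = Poly_Mapping.single [] a * (prod_list (map \<sigma> u) * Poly_Mapping.single [] b) * prod_list (map \<sigma> v)"
      by (simp only: central[of b "prod_list (map \<sigma> u)"])
    also have "\<dots> = subst \<sigma> (Poly_Mapping.single u a) * subst \<sigma> (Poly_Mapping.single v b)"
      by (simp add: subst_single mult.assoc)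
    finally show ?thesis .
  qed
  have "subst \<sigma> (f * g) = (\<Sum>u\<in>Poly_Mapping.keys f. \<Sum>v\<in>Poly_Mapping.keys g. subst \<sigma> (?m f u) * subst \<sigma> (?m g v))"
    by (simp add: fg subst_sum mono)
  also have "\<dots> = subst \<sigma> (\<Sum>u\<in>Poly_Mapping.keys f. ?m f u) * subst \<sigma> (\<Sum>v\<in>Poly_Mapping.keys g. ?m g v)"
    by (simp add: subst_sum sum_distrib_left sum_distrib_right) (rule sum.swap)
  also have "\<dots> = subst \<sigma> f * subst \<sigma> g"
    by (rule arg_cong2[where f="\<lambda>a b. subst \<sigma> a * subst \<sigma> b"]; rule poly_sum_single[symmetric])
  finally show ?thesis .
qed

lemma prod_FA: "(\<And>i. \<sigma> i \<in> FA) \<Longrightarrow> w \<noteq> [] \<Longrightarrow> prod_list (map \<sigma> w) \<in> FA"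
proof (induction w)
  case Nil then show ?case by simp
next
  case (Cons i w)
  show ?case
  proof (cases "w = []")
    case True then show ?thesis using Cons by simp
  next
    case False then show ?thesis using Cons by (simp add: FA_mult)
  qed
qed

lemma subst_FA: assumes "\<And>i. \<sigma> i \<in> FA" "f \<in> FA" shows "subst \<sigma> f \<in> FA"
  unfolding subst_def
proof (rule FA_sum)
  fix w assume "w \<in> Poly_Mapping.keys f"
  then have "w \<noteq> []" using assms(2) by (simp add: FA_iff)
  then show "Poly_Mapping.single [] (Poly_Mapping.lookup f w) * prod_list (map \<sigma> w) \<in> FA"
    by (intro FA_mult_right prod_FA assms(1))
qed simp

lemma subst_endo: "(\<And>i. \<sigma> i \<in> FA) \<Longrightarrow> is_endo (subst \<sigma>)"
  unfolding is_endo_def by (simp add: subst_FA subst_add subst_smult subst_mult pmul_eq)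

lemma single_nil_one: "Poly_Mapping.single [] 1 = (1::'k::field ncpoly)"
  using single_one[where 'a="nat list"] unfolding zero_list_def .

lemma subst_var[simp]: "subst \<sigma> (var i) = \<sigma> i"
  by (simp add: var_def subst_single single_nil_one)

lemma var_mult: "var i * Poly_Mapping.single w 1 = Poly_Mapping.single (i # w) (1::'k::field)"
  by (simp add: var_def mult_single_list)

lemma endo_single1: assumes "is_endo \<phi>" "w \<noteq> []"
  shows "\<phi> (Poly_Mapping.single w 1) = prod_list (map (\<lambda>i. \<phi> (var i)) w)"
  using assms(2)
proof (induction w)
  case Nil then show ?case by simp
next
  case (Cons i w)
  show ?case
  proof (cases "w = []")
    case True then show ?thesis by (simp add: var_def)
  next
    case False
    have "\<phi> (Poly_Mapping.single (i # w) 1) = \<phi> (var i * Poly_Mapping.single w 1)"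
      by (simp add: var_mult)
    also have "\<dots> = \<phi> (var i) * \<phi> (Poly_Mapping.single w 1)"
      by (rule endo_mult[OF assms(1) FA_var FA_single[OF False]])
    finally show ?thesis using Cons False by simp
  qed
qed

lemma endo_single: assumes "is_endo \<phi>" "w \<noteq> []"
  shows "\<phi> (Poly_Mapping.single w c) = subst (\<lambda>i. \<phi> (var i)) (Poly_Mapping.single w c)"
proof -
  have "Poly_Mapping.single w c = smult c (Poly_Mapping.single w 1)"
    by (simp add: smult_eq mult_single_list)
  then have "\<phi> (Poly_Mapping.single w c) = smult c (\<phi> (Poly_Mapping.single w 1))"
    using endo_smult[OF assms(1) FA_single[OF assms(2)]] by simp
  then show ?thesis using endo_single1[OF assms] by (simp add: subst_single smult_eq)
qed

lemma endo_eq_subst: assumes "is_endo \<phi>" "f \<in> FA"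
  shows "\<phi> f = subst (\<lambda>i. \<phi> (var i)) f"
proof -
  let ?m = "\<lambda>w. Poly_Mapping.single w (Poly_Mapping.lookup f w)"
  have ne: "w \<in> Poly_Mapping.keys f \<Longrightarrow> w \<noteq> []" for w using assms(2) by (simp add: FA_iff)
  have "\<phi> f = \<phi> (\<Sum>w\<in>Poly_Mapping.keys f. ?m w)" by (rule arg_cong[where f=\<phi>]; rule poly_sum_single)
  also have "\<dots> = (\<Sum>w\<in>Poly_Mapping.keys f. \<phi> (?m w))"
    by (rule endo_sum[OF assms(1)]) (simp_all add: FA_single ne)
  also have "\<dots> = (\<Sum>w\<in>Poly_Mapping.keys f. subst (\<lambda>i. \<phi> (var i)) (?m w))"
    by (rule sum.cong[OF refl], rule endo_single[OF assms(1) ne])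
  also have "\<dots> = subst (\<lambda>i. \<phi> (var i)) (\<Sum>w\<in>Poly_Mapping.keys f. ?m w)"
    by (simp add: subst_sum)
  also have "\<dots> = subst (\<lambda>i. \<phi> (var i)) f" by (rule arg_cong[where f="subst (\<lambda>i. \<phi> (var i))"]; rule poly_sum_single[symmetric])
  finally show ?thesis .
qed

definition bnd :: "nat \<Rightarrow> 'k::field ncpoly \<Rightarrow> bool" where
  "bnd M f \<longleftrightarrow> (\<forall>w\<in>Poly_Mapping.keys f. \<forall>i\<in>set w. i < M)"

lemma exists_bnd: "\<exists>M. bnd M f"
proof -
  have "finite (\<Union>w\<in>Poly_Mapping.keys f. set w)" by simp
  then obtain M where "\<forall>i\<in>(\<Union>w\<in>Poly_Mapping.keys f. set w). i < M"
    using finite_nat_set_iff_bounded by blast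
  then show ?thesis unfolding bnd_def by blast
qed

lemma subst_cong: assumes "\<And>i. i < M \<Longrightarrow> \<sigma> i = \<tau> i" "bnd M f"
  shows "subst \<sigma> f = subst \<tau> f"
  unfolding subst_def
proof (rule sum.cong[OF refl])
  fix w assume "w \<in> Poly_Mapping.keys f"
  then have "\<forall>i\<in>set w. i < M" using assms(2) by (simp add: bnd_def)
  then have "map \<sigma> w = map \<tau> w" using assms(1) by (intro map_cong) auto
  then show "Poly_Mapping.single [] (Poly_Mapping.lookup f w) * prod_list (map \<sigma> w) =
        Poly_Mapping.single [] (Poly_Mapping.lookup f w) * prod_list (map \<tau> w)" by (simp only:)
qed

definition shift :: "nat \<Rightarrow> 'k::field ncpoly \<Rightarrow> 'k ncpoly" where
  "shift N = subst (\<lambda>i. var (i + N))"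

lemma shift_endo: "is_endo (shift N)"
  unfolding shift_def by (rule subst_endo) simp

lemma glue:
  assumes \<phi>: "is_endo \<phi>" and \<psi>: "is_endo \<psi>" and b: "bnd M g" and g: "g \<in> FA" and h: "h \<in> FA"
  shows "\<exists>\<chi>. is_endo \<chi> \<and> \<chi> g = \<psi> g \<and> \<chi> (shift M h) = \<phi> h"
proof -
  define \<tau> where "\<tau> i = (if i < M then \<psi> (var i) else \<phi> (var (i - M)))" for i
  have \<tau>FA: "\<tau> i \<in> FA" for i unfolding \<tau>_def using endo_FA[OF \<phi>] endo_FA[OF \<psi>] by simp
  have e: "is_endo (subst \<tau>)" by (rule subst_endo[OF \<tau>FA])
  have 1: "subst \<tau> g = \<psi> g"
    using subst_cong[of M \<tau> "\<lambda>i. \<psi> (var i)" g, OF _ b] endo_eq_subst[OF \<psi> g] by (simp add: \<tau>_def)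
  have ec: "is_endo (\<lambda>x. subst \<tau> (shift M x))" by (rule endo_comp[OF e shift_endo])
  have "subst \<tau> (shift M h) = subst (\<lambda>i. subst \<tau> (shift M (var i))) h"
    using endo_eq_subst[OF ec h] .
  also have "\<dots> = subst (\<lambda>i. \<phi> (var i)) h"
    by (simp add: shift_def \<tau>_def)
  also have "\<dots> = \<phi> h" using endo_eq_subst[OF \<phi> h] by simp
  finally show ?thesis using e 1 by blast
qed



lemma setmul_eq: "setmul A B = {a * b | a b. a \<in> A \<and> b \<in> B}"
  by (simp add: setmul_def pmul_eq)

lemma T_add: "T_space V \<Longrightarrow> f \<in> V \<Longrightarrow> g \<in> V \<Longrightarrow> f + g \<in> V"
  unfolding T_space_def by blast

lemma T_smult: "T_space V \<Longrightarrow> f \<in> V \<Longrightarrow> smult c f \<in> V"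
  unfolding T_space_def by blast

lemma T_0: "T_space V \<Longrightarrow> 0 \<in> V"
  unfolding T_space_def by blast

lemma T_spaceI:
  assumes "V \<subseteq> FA" "0 \<in> V" "\<And>f g. f \<in> V \<Longrightarrow> g \<in> V \<Longrightarrow> f + g \<in> V"
    "\<And>f c. f \<in> V \<Longrightarrow> smult c f \<in> V" "\<And>\<phi> f. is_endo \<phi> \<Longrightarrow> f \<in> V \<Longrightarrow> \<phi> f \<in> V"
  shows "T_space V"
  using assms unfolding T_space_def by blast

lemma smult_mult_right: "f * smult c g = smult c (f * (g::'k::field ncpoly))"
proof -
  have "f * (Poly_Mapping.single [] c * g) = (f * Poly_Mapping.single [] c) * g" by (simp add: mult.assoc)
  also have "\<dots> = (Poly_Mapping.single [] c * f) * g" by (simp only: central)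
  also have "\<dots> = Poly_Mapping.single [] c * (f * g)" by (simp add: mult.assoc)
  finally show ?thesis by (simp add: smult_eq)
qed

lemma smult_mult_left: "smult c f * g = smult c (f * (g::'k::field ncpoly))"
  by (simp add: smult_eq mult.assoc)

lemma prod_lemma:
  fixes u v :: "'k::field ncpoly"
  assumes u: "u \<in> FA" and v: "v \<in> FA" and b: "bnd N u"
  shows "Tgen (setmul (Tgen {u}) (Tgen {v})) = Tgen {u * shift N v}"
proof
  define W where "W = Tgen {u * shift N v}"
  have swFA: "shift N v \<in> FA" using endo_FA[OF shift_endo v] .
  have W: "T_space W" unfolding W_def by (rule Tgen_T) (simp add: FA_mult[OF u swFA])
  have uw: "u * shift N v \<in> W" unfolding W_def using Tgen_sub by blast
  have Tv: "T_space (Tgen {v})" by (rule Tgen_T) (simp add: v)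
  have Tu: "T_space (Tgen {u})" by (rule Tgen_T) (simp add: u)
  define SA where "SA = {g \<in> FA. \<forall>\<phi>. is_endo \<phi> \<longrightarrow> \<phi> u * g \<in> W}"
  have SA: "T_space SA"
  proof (rule T_spaceI)
    show "SA \<subseteq> FA" by (auto simp: SA_def)
    show "0 \<in> SA" using T_0[OF W] by (auto simp: SA_def)
    show "f + g \<in> SA" if "f \<in> SA" "g \<in> SA" for f g
      using that T_add[OF W] by (auto simp: SA_def distrib_left FA_add)
    show "smult c f \<in> SA" if "f \<in> SA" for f c
      using that T_smult[OF W] by (auto simp: SA_def smult_mult_right FA_smult)
    show "\<psi> g \<in> SA" if \<psi>: "is_endo \<psi>" and g: "g \<in> SA" for \<psi> g
    proof -
      have gFA: "g \<in> FA" using g by (simp add: SA_def)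
      obtain M where bM: "bnd M g" using exists_bnd by blast
      have "shift M u * g \<in> W" using g shift_endo unfolding SA_def by blast
      have "\<phi> u * \<psi> g \<in> W" if \<phi>: "is_endo \<phi>" for \<phi>
      proof -
        obtain \<chi> where \<chi>: "is_endo \<chi>" "\<chi> g = \<psi> g" "\<chi> (shift M u) = \<phi> u"
          using glue[OF \<phi> \<psi> bM gFA u] by blast
        have "\<chi> (shift M u * g) \<in> W" by (rule T_endo[OF W \<chi>(1)]) fact
        moreover have "\<chi> (shift M u * g) = \<phi> u * \<psi> g"
          using endo_mult[OF \<chi>(1) endo_FA[OF shift_endo u] gFA] \<chi> by simp
        ultimately show ?thesis by simp
      qed
      then show ?thesis using endo_FA[OF \<psi> gFA] by (simp add: SA_def)
    qed
  qed
  have vSA: "v \<in> SA"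
  proof -
    have "\<phi> u * v \<in> W" if \<phi>: "is_endo \<phi>" for \<phi>
    proof -
      obtain \<chi> where \<chi>: "is_endo \<chi>" "\<chi> u = \<phi> u" "\<chi> (shift N v) = v"
        using glue[OF endo_id \<phi> b u v] by auto
      have "\<chi> (u * shift N v) \<in> W" by (rule T_endo[OF W \<chi>(1) uw])
      moreover have "\<chi> (u * shift N v) = \<phi> u * v"
        using endo_mult[OF \<chi>(1) u swFA] \<chi> by simp
      ultimately show ?thesis by simp
    qed
    then show ?thesis using v by (simp add: SA_def)
  qed
  have TvSA: "Tgen {v} \<subseteq> SA" by (rule Tgen_least[OF SA]) (simp add: vSA)
  define SB where "SB = {f \<in> FA. \<forall>g\<in>Tgen {v}. f * g \<in> W}"
  have SB: "T_space SB"
  proof (rule T_spaceI)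
    show "SB \<subseteq> FA" by (auto simp: SB_def)
    show "0 \<in> SB" using T_0[OF W] by (auto simp: SB_def)
    show "f + g \<in> SB" if "f \<in> SB" "g \<in> SB" for f g
      using that T_add[OF W] by (auto simp: SB_def distrib_right FA_add)
    show "smult c f \<in> SB" if "f \<in> SB" for f c
      using that T_smult[OF W] by (auto simp: SB_def smult_mult_left FA_smult)
    show "\<phi> f \<in> SB" if \<phi>: "is_endo \<phi>" and f: "f \<in> SB" for \<phi> f
    proof -
      have fFA: "f \<in> FA" using f by (simp add: SB_def)
      obtain M where bM: "bnd M f" using exists_bnd by blast
      have "\<phi> f * g \<in> W" if g: "g \<in> Tgen {v}" for g
      proof -
        have gFA: "g \<in> FA" using T_FA[OF Tv g] .
        have "shift M g \<in> Tgen {v}" by (rule T_endo[OF Tv shift_endo g])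
        then have 1: "f * shift M g \<in> W" using f by (simp add: SB_def)
        obtain \<chi> where \<chi>: "is_endo \<chi>" "\<chi> f = \<phi> f" "\<chi> (shift M g) = g"
          using glue[OF endo_id \<phi> bM fFA gFA] by auto
        have "\<chi> (f * shift M g) \<in> W" by (rule T_endo[OF W \<chi>(1) 1])
        moreover have "\<chi> (f * shift M g) = \<phi> f * g"
          using endo_mult[OF \<chi>(1) fFA endo_FA[OF shift_endo gFA]] \<chi> by simp
        ultimately show ?thesis by simp
      qed
      then show ?thesis using endo_FA[OF \<phi> fFA] by (simp add: SB_def)
    qed
  qed
  have uSB: "u \<in> SB"
  proof -
    have "u * g \<in> W" if "g \<in> Tgen {v}" for g
      using TvSA that endo_id by (auto simp: SA_def)
    then show ?thesis using u by (simp add: SB_def)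
  qed
  have TuSB: "Tgen {u} \<subseteq> SB" by (rule Tgen_least[OF SB]) (simp add: uSB)
  have "setmul (Tgen {u}) (Tgen {v}) \<subseteq> W"
    using TuSB by (auto simp: setmul_eq SB_def)
  then show "Tgen (setmul (Tgen {u}) (Tgen {v})) \<subseteq> Tgen {u * shift N v}"
    unfolding W_def by (rule Tgen_least[OF W[unfolded W_def]])
  have sFA: "setmul (Tgen {u}) (Tgen {v}) \<subseteq> FA"
    using T_FA[OF Tu] T_FA[OF Tv] by (auto simp: setmul_eq intro: FA_mult)
  have "u * shift N v \<in> setmul (Tgen {u}) (Tgen {v})"
    unfolding setmul_eq using Tgen_sub[of "{u}"] T_endo[OF Tv shift_endo, of v] Tgen_sub[of "{v}"] by blast
  then have "u * shift N v \<in> Tgen (setmul (Tgen {u}) (Tgen {v}))" using Tgen_sub by blast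
  then show "Tgen {u * shift N v} \<subseteq> Tgen (setmul (Tgen {u}) (Tgen {v}))"
    by (intro Tgen_least Tgen_T sFA) simp
qed



definition word :: "nat \<Rightarrow> nat \<Rightarrow> nat list" where
  "word p n = concat (map (\<lambda>i. replicate p i) [0..<n])"

lemma word_Suc: "word p (Suc n) = word p n @ replicate p n"
  by (simp add: word_def)

lemma word_ne: "p \<ge> 1 \<Longrightarrow> n \<ge> 1 \<Longrightarrow> word p n \<noteq> []"
  by (cases n) (auto simp: word_Suc)

lemma word_set: "i \<in> set (word p n) \<Longrightarrow> i < n"
  by (auto simp: word_def)

lemma word_add: "word p m @ map (\<lambda>i. i + m) (word p n) = word p (m + n)"
  by (induction n) (simp_all add: word_Suc add.commute word_def)

definition G :: "nat \<Rightarrow> nat \<Rightarrow> 'k::field ncpoly" where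
  "G p n = Poly_Mapping.single (word p n) 1"

lemma G_FA: "p \<ge> 1 \<Longrightarrow> n \<ge> 1 \<Longrightarrow> G p n \<in> FA"
  by (simp add: G_def FA_single word_ne)

lemma G_bnd: "bnd n (G p n)"
  by (simp add: G_def bnd_def word_set)

lemma prod_vars: "prod_list (map var w) = Poly_Mapping.single w (1::'k::field)"
  by (induction w) (simp_all add: single_nil_one var_mult)

lemma shift_single1: "shift N (Poly_Mapping.single w (1::'k::field)) = Poly_Mapping.single (map (\<lambda>i. i + N) w) 1"
proof -
  have "shift N (Poly_Mapping.single w (1::'k)) = prod_list (map var (map (\<lambda>i. i + N) w))"
    by (simp add: shift_def subst_single single_nil_one comp_def)
  then show ?thesis by (simp only: prod_vars)
qed

lemma G_add: "G p m * shift m (G p n) = (G p (m + n) :: 'k::field ncpoly)"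
  by (simp add: G_def shift_single1 mult_single_list word_add)

lemma ppow_var: "ppow (var 0) (Suc n) = Poly_Mapping.single (replicate (Suc n) 0) (1::'k::field)"
  by (induction n) (simp_all add: var_def pmul_eq mult_single_list)

lemma G_1: "p \<ge> 1 \<Longrightarrow> G p 1 = (ppow (var 0) p :: 'k::field ncpoly)"
  by (cases p) (simp_all add: G_def word_def ppow_var)

lemma H_G: assumes p: "p \<ge> 1" and n1: "n \<ge> 1" shows "H p n = (Tgen {G p n} :: 'k::field ncpoly set)"
  using n1
proof (induction n rule: nat_induct_at_least)
  case base then show ?case using G_1[OF p, where 'k='k] by simp
next
  case (Suc n)
  have "H p (Suc n) = (Tgen (setmul (H p n) (H p 1)) :: 'k ncpoly set)"
    using Suc.hyps by (cases n) simp_all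
  also have "\<dots> = Tgen (setmul (Tgen {G p n}) (Tgen {G p 1}))"
    using Suc G_1[OF p, where 'k='k] by simp
  also have "\<dots> = Tgen {G p n * shift n (G p 1)}"
    by (rule prod_lemma[OF G_FA G_FA G_bnd]) (use Suc p in auto)
  also have "\<dots> = Tgen {G p (Suc n)}" by (simp add: G_add)
  finally show ?case .
qed

theorem lemma4p2:
  fixes p m n :: nat
  assumes "prime p" and "CHAR('k::field) = p" and "m \<ge> 1" and "n \<ge> 1"
  shows "Tgen (setmul (H p m :: 'k ncpoly set) (H p n)) = H p (m + n)"
proof -
  have p: "p \<ge> 1" using assms(1) prime_ge_1_nat by blast
  have "Tgen (setmul (H p m :: 'k ncpoly set) (H p n)) = Tgen (setmul (Tgen {G p m}) (Tgen {G p n}))"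
    using H_G[OF p assms(3), where 'k='k] H_G[OF p assms(4), where 'k='k] by simp
  also have "\<dots> = Tgen {G p m * shift m (G p n)}"
    by (rule prod_lemma[OF G_FA[OF p assms(3)] G_FA[OF p assms(4)] G_bnd])
  also have "\<dots> = H p (m + n)"
    using H_G[OF p, of "m + n", where 'k='k] assms(3) by (simp add: G_add)
  finally show ?thesis .
qed

end
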